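(* Let $\varphi:\mathbb{D}\to\mathbb{C}$ be a function and let $\mathcal{H}_k$ be a truncated space with orthonormal basis $\{f_m\}_{m\ge0}$, $f_m(z) = (1 + b_m z)z^m$, where $b_t = 0$ for all $t \ge n$. Then $\varphi$ is a multiplier of $\mathcal{H}_k$ (i.e. $\varphi\mathcal{H}_k \subseteq \mathcal{H}_k$) if and only if $\varphi \in H^\infty(\mathbb{D})$.
   Context: Fix $n \ge 1$. A truncated space is a reproducing kernel Hilbert space $\mathcal{H}_k$ of analytic functions on the open unit disc $\mathbb{D}$ (with scalar analytic kernel $k$) such that: $\mathbb{C}[z]\subseteq\mathcal{H}_k$; the multiplication operator $M_z$ is bounded on $\mathcal{H}_k$; and the functions $f_m(z) = (1 + b_m z)z^m$, $m \ge 0$, form an orthonormal basis of $\mathcal{H}_k$, for scalars $\{b_m\}_{m\ge0}$ with $b_t = 0$ for all $t \ge n$. $H^\infty(\mathbb{D})$ denotes the bounded analytic functions on $\mathbb{D}$. *)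

theory Defs
  imports "HOL-Analysis.Analysis" "HOL-Computational_Algebra.Polynomial"
begin

definition trunc_basis :: "(nat \<Rightarrow> complex) \<Rightarrow> nat \<Rightarrow> complex \<Rightarrow> complex" where
  "trunc_basis b m z = (1 + b m * z) * z ^ m"

definition sq_summable :: "(nat \<Rightarrow> complex) \<Rightarrow> bool" where
  "sq_summable a \<longleftrightarrow> summable (\<lambda>m. (norm (a m))\<^sup>2)"

definition trunc_repr :: "(nat \<Rightarrow> complex) \<Rightarrow> (nat \<Rightarrow> complex) \<Rightarrow> (complex \<Rightarrow> complex) \<Rightarrow> bool" where
  "trunc_repr b a f \<longleftrightarrow> sq_summable a \<and>
     (\<forall>z \<in> ball 0 1. (\<lambda>m. a m * trunc_basis b m z) sums f z)"

text \<open>Membership in the Hilbert space H_k in which (f_m) is an orthonormal basis: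
  exactly the functions sum_m a_m f_m with (a_m) in l^2 (as functions on the disc).\<close>
definition in_trunc_space :: "(nat \<Rightarrow> complex) \<Rightarrow> (complex \<Rightarrow> complex) \<Rightarrow> bool" where
  "in_trunc_space b f \<longleftrightarrow> (\<exists>a. trunc_repr b a f)"

definition trunc_multiplier :: "(nat \<Rightarrow> complex) \<Rightarrow> (complex \<Rightarrow> complex) \<Rightarrow> bool" where
  "trunc_multiplier b \<phi> \<longleftrightarrow>
     (\<forall>f. in_trunc_space b f \<longrightarrow> in_trunc_space b (\<lambda>z. \<phi> z * f z))"

definition H_infty :: "(complex \<Rightarrow> complex) set" where
  "H_infty = {\<phi>. \<phi> holomorphic_on ball 0 1 \<and> bounded (\<phi> ` ball 0 1)}"

text \<open>Standing hypotheses of a truncated space: polynomials belong to H_k and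
  M_z is bounded (norm of sum a_m f_m is the l^2 norm of a, since (f_m) is orthonormal).\<close>
definition trunc_space_hyps :: "(nat \<Rightarrow> complex) \<Rightarrow> bool" where
  "trunc_space_hyps b \<longleftrightarrow>
     (\<forall>p :: complex poly. in_trunc_space b (poly p)) \<and>
     (\<exists>C. \<forall>a f. trunc_repr b a f \<longrightarrow>
        (\<exists>c. trunc_repr b c (\<lambda>z. z * f z) \<and>
             (\<Sum>m. (norm (c m))\<^sup>2) \<le> C * (\<Sum>m. (norm (a m))\<^sup>2)))"

end

theory Submission
  imports Defs "HOL-Complex_Analysis.Complex_Analysis"
begin

definition in_H2 :: "(complex \<Rightarrow> complex) \<Rightarrow> bool" where
  "in_H2 f \<longleftrightarrow> (\<exists>c. sq_summable c \<and> (\<forall>z \<in> ball 0 1. (\<lambda>m. c m * z ^ m) sums f z))"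

definition Tb :: "(nat \<Rightarrow> complex) \<Rightarrow> (nat \<Rightarrow> complex) \<Rightarrow> nat \<Rightarrow> complex" where
  "Tb b a m = a m + (case m of 0 \<Rightarrow> 0 | Suc k \<Rightarrow> b k * a k)"

fun tinv :: "(nat \<Rightarrow> complex) \<Rightarrow> (nat \<Rightarrow> complex) \<Rightarrow> nat \<Rightarrow> complex" where
  "tinv b c 0 = c 0"
| "tinv b c (Suc k) = c (Suc k) - b k * tinv b c k"

lemma Tb_tinv: "Tb b (tinv b c) = c"
proof
  fix m show "Tb b (tinv b c) m = c m" by (cases m) (auto simp: Tb_def)
qed

lemma sq_summable_cong:
  assumes "eventually (\<lambda>m. a m = c m) sequentially"
  shows "sq_summable a \<longleftrightarrow> sq_summable c"
  unfolding sq_summable_def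
  by (rule summable_cong) (use assms in \<open>auto elim: eventually_mono\<close>)

lemma Tb_ev:
  assumes "\<forall>t\<ge>n. b t = 0"
  shows "eventually (\<lambda>m. Tb b a m = a m) sequentially"
proof (rule eventually_sequentiallyI[of "Suc n"])
  fix m assume "Suc n \<le> m"
  then obtain k where "m = Suc k" "k \<ge> n" by (cases m) auto
  then show "Tb b a m = a m" using assms by (simp add: Tb_def)
qed

lemma Tb_sums:
  assumes "\<forall>t\<ge>n. b t = 0"
  shows "(\<lambda>m. a m * trunc_basis b m z) sums F \<longleftrightarrow> (\<lambda>m. Tb b a m * z ^ m) sums F"
proof -
  define u where "u m = a m * b m * z ^ Suc m" for m
  define v where "v m = (case m of 0 \<Rightarrow> 0 | Suc k \<Rightarrow> u k)" for m
  have ev: "eventually (\<lambda>m. u m = 0) sequentially"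
    by (rule eventually_sequentiallyI[of n]) (use assms in \<open>simp add: u_def\<close>)
  have "summable u"
    using summable_cong[OF ev] by simp
  then have u: "u sums (suminf u)" by (simp add: summable_sums)
  have v: "v sums (suminf u)"
    using u sums_Suc_iff[of v "suminf u"] by (simp add: v_def)
  have e1: "(\<lambda>m. a m * trunc_basis b m z) = (\<lambda>m. a m * z ^ m + u m)"
    by (auto simp: trunc_basis_def u_def algebra_simps)
  have e2: "(\<lambda>m. Tb b a m * z ^ m) = (\<lambda>m. a m * z ^ m + v m)"
    by (auto simp: Tb_def v_def u_def algebra_simps split: nat.splits)
  have "(\<lambda>m. a m * z ^ m + u m) sums F \<longleftrightarrow> (\<lambda>m. a m * z ^ m) sums (F - suminf u)"
  proof
    assume "(\<lambda>m. a m * z ^ m + u m) sums F"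
    from sums_diff[OF this u] show "(\<lambda>m. a m * z ^ m) sums (F - suminf u)" by simp
  next
    assume "(\<lambda>m. a m * z ^ m) sums (F - suminf u)"
    from sums_add[OF this u] show "(\<lambda>m. a m * z ^ m + u m) sums F" by simp
  qed
  also have "\<dots> \<longleftrightarrow> (\<lambda>m. a m * z ^ m + v m) sums F"
  proof
    assume "(\<lambda>m. a m * z ^ m) sums (F - suminf u)"
    from sums_add[OF this v] show "(\<lambda>m. a m * z ^ m + v m) sums F" by simp
  next
    assume "(\<lambda>m. a m * z ^ m + v m) sums F"
    from sums_diff[OF this v] show "(\<lambda>m. a m * z ^ m) sums (F - suminf u)" by simp
  qed
  finally show ?thesis using e1 e2 by simp
qed

lemma trunc_iff_H2:
  assumes "\<forall>t\<ge>n. b t = 0"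
  shows "in_trunc_space b f \<longleftrightarrow> in_H2 f"
proof
  assume "in_trunc_space b f"
  then obtain a where a: "sq_summable a" "\<forall>z\<in>ball 0 1. (\<lambda>m. a m * trunc_basis b m z) sums f z"
    unfolding in_trunc_space_def trunc_repr_def by blast
  have "sq_summable (Tb b a)" using a(1) sq_summable_cong[OF Tb_ev[OF assms]] by blast
  moreover have "\<forall>z\<in>ball 0 1. (\<lambda>m. Tb b a m * z ^ m) sums f z"
    using a(2) Tb_sums[OF assms] by blast
  ultimately show "in_H2 f" unfolding in_H2_def by blast
next
  assume "in_H2 f"
  then obtain c where c: "sq_summable c" "\<forall>z\<in>ball 0 1. (\<lambda>m. c m * z ^ m) sums f z"
    unfolding in_H2_def by blast
  define a where "a = tinv b c"
  have Ta: "Tb b a = c" by (simp add: a_def Tb_tinv)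
  have "sq_summable a" using c(1) sq_summable_cong[OF Tb_ev[OF assms], of a] Ta by simp
  moreover have "\<forall>z\<in>ball 0 1. (\<lambda>m. a m * trunc_basis b m z) sums f z"
    using c(2) Tb_sums[OF assms, of a] Ta by simp
  ultimately show "in_trunc_space b f" unfolding in_trunc_space_def trunc_repr_def by blast
qed

lemma mult_iff_H2:
  assumes "\<forall>t\<ge>n. b t = 0"
  shows "trunc_multiplier b \<phi> \<longleftrightarrow> (\<forall>f. in_H2 f \<longrightarrow> in_H2 (\<lambda>z. \<phi> z * f z))"
  unfolding trunc_multiplier_def trunc_iff_H2[OF assms] ..



definition conv :: "(nat \<Rightarrow> complex) \<Rightarrow> (nat \<Rightarrow> complex) \<Rightarrow> nat \<Rightarrow> complex" where
  "conv a f m = (\<Sum>i\<le>m. a i * f (m - i))"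

definition ser :: "(nat \<Rightarrow> complex) \<Rightarrow> (complex \<Rightarrow> complex) \<Rightarrow> bool" where
  "ser c g \<longleftrightarrow> (\<forall>z\<in>ball 0 1. (\<lambda>m. c m * z ^ m) sums g z)"

lemma sq_abs_summable:
  assumes "sq_summable c" "norm z < 1"
  shows "summable (\<lambda>m. norm (c m * z ^ m))"
proof (rule summable_comparison_test[where g = "\<lambda>m. ((norm (c m))\<^sup>2 + (norm z ^ 2) ^ m) / 2"])
  show "\<exists>N. \<forall>m\<ge>N. norm (norm (c m * z ^ m)) \<le> ((norm (c m))\<^sup>2 + (norm z ^ 2) ^ m) / 2"
  proof (intro exI allI impI)
    fix m :: nat
    have "0 \<le> (norm (c m) - norm z ^ m)\<^sup>2" by simp
    then have "norm (c m) * norm z ^ m \<le> ((norm (c m))\<^sup>2 + (norm z ^ m)\<^sup>2) / 2"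
      by (simp add: power2_eq_square algebra_simps)
    then show "norm (norm (c m * z ^ m)) \<le> ((norm (c m))\<^sup>2 + (norm z ^ 2) ^ m) / 2"
      by (simp add: norm_mult norm_power power_mult[symmetric] mult.commute)
  qed
  have "summable (\<lambda>m. (norm z ^ 2) ^ m)"
    using assms(2) by (intro summable_geometric) (simp add: abs_square_less_1)
  then show "summable (\<lambda>m. ((norm (c m))\<^sup>2 + (norm z ^ 2) ^ m) / 2)"
    using assms(1) unfolding sq_summable_def by (intro summable_divide summable_add)
qed

lemma ser_abs_summable:
  assumes "ser c g" "norm z < 1"
  shows "summable (\<lambda>m. norm (c m * z ^ m))"
proof -
  define x where "x = complex_of_real ((1 + norm z) / 2)"
  have nx: "norm x = (1 + norm z) / 2" unfolding x_def norm_of_real by simp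
  have "x \<in> ball 0 1" using assms(2) by (simp add: nx)
  then have "summable (\<lambda>m. c m * x ^ m)" using assms(1) unfolding ser_def sums_iff by blast
  then show ?thesis by (rule powser_insidea) (use assms(2) nx in simp)
qed

lemma ser_conv:
  assumes "ser a \<phi>" "ser f F"
  shows "ser (conv a f) (\<lambda>z. \<phi> z * F z)"
  unfolding ser_def
proof
  fix z :: complex assume z: "z \<in> ball 0 1"
  have "(\<lambda>k. \<Sum>i\<le>k. (a i * z ^ i) * (f (k - i) * z ^ (k - i))) sums
        ((\<Sum>k. a k * z ^ k) * (\<Sum>k. f k * z ^ k))"
    using z by (intro Cauchy_product_sums ser_abs_summable[OF assms(1)] ser_abs_summable[OF assms(2)]) auto
  moreover have "(\<Sum>k. a k * z ^ k) = \<phi> z" "(\<Sum>k. f k * z ^ k) = F z"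
    using assms z unfolding ser_def by (auto simp: sums_iff)
  moreover have "(\<Sum>i\<le>k. (a i * z ^ i) * (f (k - i) * z ^ (k - i))) = conv a f k * z ^ k" for k
    unfolding conv_def sum_distrib_right
    by (rule sum.cong) (auto simp: algebra_simps power_add[symmetric])
  ultimately show "(\<lambda>m. conv a f m * z ^ m) sums (\<phi> z * F z)" by simp
qed

lemma ser_coeff:
  assumes "ser c g"
  shows "c m = (deriv ^^ m) g 0 / fact m"
proof -
  have "summable (\<lambda>k. c k * (1/2) ^ k)"
  proof -
    have "(1/2::complex) \<in> ball 0 1" by simp
    then show ?thesis using assms unfolding ser_def sums_iff by blast
  qed
  then have "conv_radius c \<ge> norm (1/2 :: complex)" by (rule conv_radius_geI)
  then have rad: "fps_conv_radius (Abs_fps c) > 0"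
    by (simp add: fps_conv_radius_def) (metis ereal_less(2) less_le_trans zero_less_divide_1_iff zero_less_numeral)
  have "eventually (\<lambda>z. z \<in> ball 0 1) (nhds (0::complex))"
    by (intro eventually_nhds_in_open) auto
  then have "eventually (\<lambda>z. eval_fps (Abs_fps c) z = g z) (nhds 0)"
    by eventually_elim (use assms in \<open>auto simp: ser_def eval_fps_def sums_iff\<close>)
  then have "g has_fps_expansion Abs_fps c" using rad by (simp add: has_fps_expansion_def)
  from fps_nth_fps_expansion[OF this, of m] show ?thesis by simp
qed

lemma ser_unique:
  assumes "ser c g" "ser d g" shows "c = d"
  using ser_coeff[OF assms(1)] ser_coeff[OF assms(2)] by auto

lemma ser_holo:
  assumes "ser c g" shows "g holomorphic_on ball 0 1"
  by (rule power_series_holomorphic[where a = c]) (use assms in \<open>auto simp: ser_def\<close>)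

lemma circ_cnj:
  fixes r t :: real
  assumes "r > 0"
  shows "cnj (circlepath 0 r t) = of_real (r^2) / circlepath 0 r t"
    and "circlepath 0 r t \<noteq> 0" and "norm (circlepath 0 r t) = r"
proof -
  have n: "norm (circlepath 0 r t) = r"
    using assms by (simp add: circlepath norm_mult)
  then show "circlepath 0 r t \<noteq> 0" using assms by auto
  then show "cnj (circlepath 0 r t) = of_real (r^2) / circlepath 0 r t"
    using complex_norm_square[of "circlepath 0 r t"] n by (simp add: field_simps)
  show "norm (circlepath 0 r t) = r" by (rule n)
qed

lemma coeff_integral:
  assumes "ser c g" "0 < r" "r < 1"
  shows "((\<lambda>t. g (circlepath 0 r t) / circlepath 0 r t ^ m) has_integral c m) {0..1}"
proof -
  have hol: "g holomorphic_on ball 0 1" by (rule ser_holo[OF assms(1)])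
  have sub: "cball 0 r \<subseteq> ball (0::complex) 1" using assms by auto
  have sub2: "ball 0 r \<subseteq> ball (0::complex) 1" using assms by auto
  have "((\<lambda>u. g u / (u - 0) ^ (Suc m)) has_contour_integral ((2 * pi * \<i>) / (fact m) * (deriv ^^ m) g 0))
           (circlepath 0 r)"
    by (rule Cauchy_has_contour_integral_higher_derivative_circlepath)
       (use assms(2,3) in \<open>auto intro: holomorphic_on_subset[OF hol sub2]
          continuous_on_subset[OF holomorphic_on_imp_continuous_on[OF hol] sub]\<close>)
  also have "(2 * pi * \<i>) / (fact m) * (deriv ^^ m) g 0 = (2 * pi * \<i>) * c m"
    using ser_coeff[OF assms(1), of m] by simp
  finally have "((\<lambda>x. g (circlepath 0 r x) / (circlepath 0 r x - 0) ^ Suc m *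
            vector_derivative (circlepath 0 r) (at x within {0..1})) has_integral (2 * pi * \<i>) * c m) {0..1}"
    unfolding has_contour_integral_def .
  also have "?this \<longleftrightarrow> ((\<lambda>x. (2 * pi * \<i>) * (g (circlepath 0 r x) / circlepath 0 r x ^ m))
      has_integral (2 * pi * \<i>) * c m) {0..1}"
  proof (rule has_integral_cong)
    fix x :: real assume x: "x \<in> {0..1}"
    have "vector_derivative (circlepath 0 r) (at x within {0..1}) = 2 * pi * \<i> * circlepath 0 r x"
      using x vector_derivative_circlepath01[of x 0 r] by (simp add: circlepath)
    then show "g (circlepath 0 r x) / (circlepath 0 r x - 0) ^ Suc m *
            vector_derivative (circlepath 0 r) (at x within {0..1}) =
          (2 * pi * \<i>) * (g (circlepath 0 r x) / circlepath 0 r x ^ m)"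
      using circ_cnj(2)[OF assms(2), of x] by (simp add: field_simps)
  qed
  finally show ?thesis by (subst (asm) has_integral_mult_right_iff) auto
qed

lemma lemmaK:
  assumes "ser c g" "0 < r" "r < 1"
  shows "((\<lambda>t. g (circlepath 0 r t) * cnj (\<Sum>m<N. c m * circlepath 0 r t ^ m)) has_integral
           of_real (\<Sum>m<N. (norm (c m))\<^sup>2 * r ^ (2 * m))) {0..1}"
proof -
  have "((\<lambda>t. \<Sum>m<N. (cnj (c m) * of_real (r ^ (2*m))) * (g (circlepath 0 r t) / circlepath 0 r t ^ m)) has_integral
           (\<Sum>m<N. (cnj (c m) * of_real (r ^ (2*m))) * c m)) {0..1}"
    by (intro has_integral_sum has_integral_mult_right coeff_integral assms) auto
  also have "(\<Sum>m<N. (cnj (c m) * of_real (r ^ (2*m))) * c m) = of_real (\<Sum>m<N. (norm (c m))\<^sup>2 * r ^ (2 * m))"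
  proof -
    have X: "(complex_of_real (cmod w))\<^sup>2 = w * cnj w" for w
      using complex_norm_square[of w] by simp
    show ?thesis by (simp add: X mult_ac)
  qed
  also have "((\<lambda>t. \<Sum>m<N. (cnj (c m) * of_real (r ^ (2*m))) * (g (circlepath 0 r t) / circlepath 0 r t ^ m))
      has_integral of_real (\<Sum>m<N. (norm (c m))\<^sup>2 * r ^ (2 * m))) {0..1} \<longleftrightarrow> ?thesis"
  proof (rule has_integral_cong)
    fix t :: real
    show "(\<Sum>m<N. (cnj (c m) * of_real (r ^ (2*m))) * (g (circlepath 0 r t) / circlepath 0 r t ^ m)) =
        g (circlepath 0 r t) * cnj (\<Sum>m<N. c m * circlepath 0 r t ^ m)"
      unfolding cnj_sum sum_distrib_left
    proof (rule sum.cong)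
      fix m
      show "(cnj (c m) * of_real (r ^ (2*m))) * (g (circlepath 0 r t) / circlepath 0 r t ^ m) =
          g (circlepath 0 r t) * cnj (c m * circlepath 0 r t ^ m)"
      proof -
        have e: "cnj (circlepath 0 r t) ^ m = of_real (r^(2*m)) / circlepath 0 r t ^ m"
          using circ_cnj(1)[OF assms(2), of t] by (simp add: power_divide power_mult)
        show ?thesis using circ_cnj(2)[OF assms(2), of t] by (simp add: e field_simps)
      qed
    qed simp
  qed
  finally show ?thesis .
qed



lemma re_cnj_le: "2 * Re (z * cnj w) \<le> (norm z)\<^sup>2 + (norm w)\<^sup>2"
proof -
  have "0 \<le> (Re z - Re w)\<^sup>2 + (Im z - Im w)\<^sup>2" by simp
  then show ?thesis unfolding cmod_power2 by (simp add: power2_eq_square algebra_simps)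
qed

lemma re_self: "Re (z * cnj z) = (norm z)\<^sup>2"
  using complex_norm_square[of z] by (metis Re_complex_of_real)

lemma ser_finite:
  assumes "\<forall>k\<ge>N. p k = 0"
  shows "ser p (\<lambda>z. \<Sum>m<N. p m * z ^ m)"
  unfolding ser_def
proof
  fix z :: complex
  show "(\<lambda>m. p m * z ^ m) sums (\<Sum>m<N. p m * z ^ m)"
    by (rule sums_finite) (use assms in auto)
qed

lemma ser_finite_eq:
  assumes "ser p P" "\<forall>k\<ge>N. p k = 0" "z \<in> ball 0 1"
  shows "P z = (\<Sum>m<N. p m * z ^ m)"
  using assms ser_finite[OF assms(2)] unfolding ser_def using sums_unique2 by blast

lemma circ_in_ball:
  assumes "0 < r" "r < 1" shows "circlepath 0 r t \<in> ball 0 1"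
  using circ_cnj(3)[OF assms(1)] assms by simp

lemma ineq_circle:
  assumes c: "ser c g" and p: "ser p P" and pN: "\<forall>k\<ge>N. p k = 0"
    and gP: "\<forall>z\<in>ball 0 1. norm (g z) \<le> B * norm (P z)" and r: "0 < r" "r < 1"
  shows "(\<Sum>m<N. (norm (c m))\<^sup>2 * r ^ (2*m)) \<le> B\<^sup>2 * (\<Sum>m<N. (norm (p m))\<^sup>2 * r ^ (2*m))"
proof -
  define \<gamma> where "\<gamma> = circlepath 0 r"
  define S where "S = (\<Sum>m<N. (norm (c m))\<^sup>2 * r ^ (2*m))"
  define Q where "Q = (\<Sum>m<N. (norm (p m))\<^sup>2 * r ^ (2*m))"
  define hN where "hN z = (\<Sum>m<N. c m * z ^ m)" for z
  define cN where "cN m = (if m < N then c m else 0)" for m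
  have inb: "\<gamma> t \<in> ball 0 1" for t unfolding \<gamma>_def by (rule circ_in_ball[OF r])
  have cN: "\<forall>k\<ge>N. cN k = 0" by (simp add: cN_def)
  have hN: "hN z = (\<Sum>m<N. cN m * z ^ m)" for z unfolding hN_def cN_def by simp
  have serh: "ser cN hN" using ser_finite[OF cN] hN by presburger
  have K1: "((\<lambda>t. g (\<gamma> t) * cnj (hN (\<gamma> t))) has_integral of_real S) {0..1}"
    using lemmaK[OF c r, of N] unfolding \<gamma>_def S_def hN_def .
  have K2: "((\<lambda>t. hN (\<gamma> t) * cnj (hN (\<gamma> t))) has_integral of_real S) {0..1}"
  proof -
    have "(\<Sum>m<N. (norm (cN m))\<^sup>2 * r ^ (2*m)) = S" unfolding S_def cN_def by simp
    then show ?thesis using lemmaK[OF serh r, of N] unfolding \<gamma>_def hN[symmetric] by simp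
  qed
  have K3: "((\<lambda>t. P (\<gamma> t) * cnj (P (\<gamma> t))) has_integral of_real Q) {0..1}"
  proof -
    have "((\<lambda>t. P (\<gamma> t) * cnj (\<Sum>m<N. p m * \<gamma> t ^ m)) has_integral of_real Q) {0..1}"
      using lemmaK[OF p r, of N] unfolding \<gamma>_def Q_def .
    moreover have "(\<Sum>m<N. p m * \<gamma> t ^ m) = P (\<gamma> t)" for t
      using ser_finite_eq[OF p pN inb] by simp
    ultimately show ?thesis by simp
  qed
  have R1: "((\<lambda>t. Re (g (\<gamma> t) * cnj (hN (\<gamma> t)))) has_integral S) {0..1}"
    using has_integral_Re[OF K1] by simp
  have R2: "((\<lambda>t. (norm (hN (\<gamma> t)))\<^sup>2) has_integral S) {0..1}"
    using has_integral_Re[OF K2] by (simp only: re_self Re_complex_of_real)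
  have R3: "((\<lambda>t. (norm (P (\<gamma> t)))\<^sup>2) has_integral Q) {0..1}"
    using has_integral_Re[OF K3] by (simp only: re_self Re_complex_of_real)
  have contg: "continuous_on (ball 0 1) g"
    by (rule holomorphic_on_imp_continuous_on[OF ser_holo[OF c]])
  have contgam: "continuous_on {0..1} \<gamma>"
    using path_circlepath unfolding path_def \<gamma>_def by blast
  have "continuous_on {0..1} (\<lambda>t. g (\<gamma> t))"
    by (rule continuous_on_compose2[OF contg contgam]) (use inb in auto)
  then have "continuous_on {0..1} (\<lambda>t. (norm (g (\<gamma> t)))\<^sup>2)"
    by (intro continuous_intros)
  then have "(\<lambda>t. (norm (g (\<gamma> t)))\<^sup>2) integrable_on {0..1}"
    by (rule integrable_continuous_interval)
  then obtain IG where RG: "((\<lambda>t. (norm (g (\<gamma> t)))\<^sup>2) has_integral IG) {0..1}"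
    by blast
  have "2 * S \<le> IG + S"
  proof (rule has_integral_le)
    show "((\<lambda>t. 2 * Re (g (\<gamma> t) * cnj (hN (\<gamma> t)))) has_integral 2 * S) {0..1}"
      by (rule has_integral_mult_right[OF R1])
    show "((\<lambda>t. (norm (g (\<gamma> t)))\<^sup>2 + (norm (hN (\<gamma> t)))\<^sup>2) has_integral IG + S) {0..1}"
      by (rule has_integral_add[OF RG R2])
  qed (rule re_cnj_le)
  moreover have "IG \<le> B\<^sup>2 * Q"
  proof (rule has_integral_le[OF RG])
    show "((\<lambda>t. B\<^sup>2 * (norm (P (\<gamma> t)))\<^sup>2) has_integral B\<^sup>2 * Q) {0..1}"
      by (rule has_integral_mult_right[OF R3])
    fix t :: real
    have "norm (g (\<gamma> t)) \<le> B * norm (P (\<gamma> t))" using gP inb by blast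
    then have "(norm (g (\<gamma> t)))\<^sup>2 \<le> (B * norm (P (\<gamma> t)))\<^sup>2"
      by (rule power_mono) simp
    then show "(norm (g (\<gamma> t)))\<^sup>2 \<le> B\<^sup>2 * (norm (P (\<gamma> t)))\<^sup>2"
      by (simp add: power_mult_distrib)
  qed
  ultimately show ?thesis unfolding S_def[symmetric] Q_def[symmetric] by linarith
qed

lemma conv_cong:
  assumes "\<forall>k\<le>m. f k = h k"
  shows "conv a f m = conv a h m"
  unfolding conv_def using assms by (intro sum.cong) auto

lemma H_infty_mult:
  assumes hol: "\<phi> holomorphic_on ball 0 1" and bd: "\<forall>z\<in>ball 0 1. norm (\<phi> z) \<le> B"
    and f: "in_H2 f"
  shows "in_H2 (\<lambda>z. \<phi> z * f z)"
proof -
  define a where "a m = (deriv ^^ m) \<phi> 0 / fact m" for m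
  have sera: "ser a \<phi>"
    unfolding ser_def a_def using holomorphic_power_series[OF hol] by fastforce
  obtain fc where fc: "sq_summable fc" "ser fc f"
    using f unfolding in_H2_def ser_def by blast
  define T where "T = (\<Sum>k. (norm (fc k))\<^sup>2)"
  have smf: "summable (\<lambda>k. (norm (fc k))\<^sup>2)" using fc(1) by (simp add: sq_summable_def)
  have serd: "ser (conv a fc) (\<lambda>z. \<phi> z * f z)" by (rule ser_conv[OF sera fc(2)])
  have bnd: "(\<Sum>m<N. (norm (conv a fc m))\<^sup>2) \<le> B\<^sup>2 * T" for N
  proof -
    define pN where "pN k = (if k < N then fc k else 0)" for k
    define PN where "PN z = (\<Sum>m<N. pN m * z ^ m)" for z
    have pN0: "\<forall>k\<ge>N. pN k = 0" by (simp add: pN_def)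
    have serp: "ser pN PN" unfolding PN_def by (rule ser_finite[OF pN0])
    have serc: "ser (conv a pN) (\<lambda>z. \<phi> z * PN z)" by (rule ser_conv[OF sera serp])
    have ceq: "conv a pN m = conv a fc m" if "m < N" for m
      by (rule conv_cong) (use that in \<open>auto simp: pN_def\<close>)
    define F where "F r = (\<Sum>m<N. (norm (conv a fc m))\<^sup>2 * r ^ (2*m))" for r :: real
    have le: "F r \<le> B\<^sup>2 * T" if r: "0 < r" "r < 1" for r
    proof -
      have "F r = (\<Sum>m<N. (norm (conv a pN m))\<^sup>2 * r ^ (2*m))"
        unfolding F_def by (rule sum.cong) (auto simp: ceq)
      also have "\<dots> \<le> B\<^sup>2 * (\<Sum>m<N. (norm (pN m))\<^sup>2 * r ^ (2*m))"
      proof (rule ineq_circle[OF serc serp pN0 _ r])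
        show "\<forall>z\<in>ball 0 1. norm (\<phi> z * PN z) \<le> B * norm (PN z)"
          using bd by (auto simp: norm_mult intro: mult_right_mono)
      qed
      also have "(\<Sum>m<N. (norm (pN m))\<^sup>2 * r ^ (2*m)) \<le> (\<Sum>m<N. (norm (fc m))\<^sup>2)"
      proof (rule sum_mono)
        fix m assume "m \<in> {..<N}"
        have "r ^ (2*m) \<le> 1" using r by (intro power_le_one) auto
        then show "(norm (pN m))\<^sup>2 * r ^ (2*m) \<le> (norm (fc m))\<^sup>2"
          using \<open>m \<in> {..<N}\<close> by (simp add: pN_def mult_left_le)
      qed
      also have "(\<Sum>m<N. (norm (fc m))\<^sup>2) \<le> T"
        unfolding T_def by (rule sum_le_suminf[OF smf]) auto
      finally show ?thesis by (simp add: mult_left_mono)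
    qed
    have "(F \<longlongrightarrow> F 1) (at_left 1)"
      unfolding F_def by (intro tendsto_intros)
    moreover have "eventually (\<lambda>r. F r \<le> B\<^sup>2 * T) (at_left (1::real))"
    proof -
      have "eventually (\<lambda>x. x \<in> {0<..<1}) (at_left (1::real))"
        by (rule eventually_at_left_real) simp
      then show ?thesis by eventually_elim (use le in auto)
    qed
    ultimately have "F 1 \<le> B\<^sup>2 * T"
      by (intro tendsto_le[OF trivial_limit_at_left_real tendsto_const]) auto
    then show ?thesis by (simp add: F_def)
  qed
  have "sq_summable (conv a fc)"
    unfolding sq_summable_def by (rule summableI_nonneg_bounded[OF _ bnd]) simp
  then show ?thesis using serd unfolding in_H2_def ser_def by blast
qed



definition EE :: "(nat \<Rightarrow> complex) \<Rightarrow> (nat \<Rightarrow> complex) \<Rightarrow> nat \<Rightarrow> real" where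
  "EE a f N = (\<Sum>m<N. (norm (conv a f m))\<^sup>2)"

definition sh :: "nat \<Rightarrow> (nat \<Rightarrow> complex) \<Rightarrow> nat \<Rightarrow> complex" where
  "sh M p k = (if M \<le> k then p (k - M) else 0)"

lemma conv_add: "conv a (\<lambda>k. f k + h k) m = conv a f m + conv a h m"
  unfolding conv_def by (simp add: distrib_left sum.distrib)

lemma conv_scale: "conv a (\<lambda>k. c * f k) m = c * conv a f m"
  unfolding conv_def by (simp add: sum_distrib_left mult_ac)

lemma conv_zero: "conv a (\<lambda>k. 0) m = 0"
  unfolding conv_def by simp

lemma conv_sh_low: "m < M \<Longrightarrow> conv a (sh M p) m = 0"
  unfolding conv_def sh_def by (intro sum.neutral) auto

lemma conv_sh: "conv a (sh M p) (M + m) = conv a p m"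
proof -
  have "conv a (sh M p) (M + m) = (\<Sum>i\<le>M + m. a i * sh M p (M + m - i))" by (simp add: conv_def)
  also have "\<dots> = (\<Sum>i\<le>m. a i * sh M p (M + m - i))"
    by (rule sum.mono_neutral_right) (auto simp: sh_def)
  also have "\<dots> = conv a p m"
    unfolding conv_def by (rule sum.cong) (auto simp: sh_def)
  finally show ?thesis .
qed

lemma sum_split_add: "(\<Sum>k<M + n. h k) = (\<Sum>k<M. h k) + (\<Sum>l<n. h (M + l :: nat))"
  by (induction n) (auto simp: add.assoc)

lemma EE_sh: "EE a (sh M p) (M + n) = EE a p n"
  unfolding EE_def sum_split_add by (simp add: conv_sh_low conv_sh)

lemma EE_cong: "(\<forall>k<N. f k = h k) \<Longrightarrow> EE a f N = EE a h N"
  unfolding EE_def by (intro sum.cong refl, subst conv_cong[of _ f h]) auto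

lemma hump_pieces:
  assumes H: "\<not> (\<exists>C. \<forall>p N. sq_summable p \<longrightarrow> EE a p N \<le> C * (\<Sum>k. (norm (p k))\<^sup>2))"
    and e: "\<epsilon> > 0"
  shows "\<exists>p n. (\<forall>k\<ge>n. p k = 0) \<and> (\<Sum>k<n. (norm (p k))\<^sup>2) \<le> \<epsilon> \<and> C \<le> EE a p n"
proof -
  define C' where "C' = \<bar>C\<bar> / \<epsilon>"
  have C'0: "C' \<ge> 0" using e by (simp add: C'_def)
  from H obtain p0 N where p0: "sq_summable p0" "EE a p0 N > C' * (\<Sum>k. (norm (p0 k))\<^sup>2)"
    by (meson not_le)
  define p1 where "p1 k = (if k < N then p0 k else 0)" for k
  define s1 where "s1 = (\<Sum>k<N. (norm (p0 k))\<^sup>2)"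
  have E1: "EE a p1 N = EE a p0 N" by (rule EE_cong) (simp add: p1_def)
  have "s1 \<le> (\<Sum>k. (norm (p0 k))\<^sup>2)"
    unfolding s1_def using p0(1) by (intro sum_le_suminf) (auto simp: sq_summable_def)
  then have "C' * s1 \<le> C' * (\<Sum>k. (norm (p0 k))\<^sup>2)" using C'0 by (rule mult_left_mono)
  then have Egt: "EE a p1 N > C' * s1" using p0(2) E1 by linarith
  have s1pos: "s1 > 0"
  proof (rule ccontr)
    assume "\<not> s1 > 0"
    moreover have "s1 \<ge> 0" unfolding s1_def by (intro sum_nonneg) auto
    ultimately have "s1 = 0" by linarith
    then have "\<forall>k\<in>{..<N}. (norm (p0 k))\<^sup>2 = 0" unfolding s1_def
      by (subst (asm) sum_nonneg_eq_0_iff) auto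
    then have "\<forall>k. p1 k = 0" by (auto simp: p1_def)
    then have "p1 = (\<lambda>k. 0)" by auto
    then have "EE a p1 N = 0" by (simp add: EE_def conv_zero)
    then show False using Egt \<open>s1 = 0\<close> by simp
  qed
  define t where "t = sqrt (\<epsilon> / s1)"
  have t2: "t\<^sup>2 = \<epsilon> / s1" unfolding t_def using e s1pos by simp
  define p where "p k = complex_of_real t * p1 k" for k
  have "\<forall>k\<ge>N. p k = 0" by (simp add: p_def p1_def)
  moreover have "(\<Sum>k<N. (norm (p k))\<^sup>2) = \<epsilon>"
  proof -
    have "(\<Sum>k<N. (norm (p k))\<^sup>2) = t\<^sup>2 * s1"
      unfolding s1_def sum_distrib_left
      by (rule sum.cong) (auto simp: p_def p1_def norm_mult power_mult_distrib)
    then show ?thesis using t2 s1pos by simp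
  qed
  moreover have "C \<le> EE a p N"
  proof -
    have "EE a p N = t\<^sup>2 * EE a p1 N"
      unfolding EE_def sum_distrib_left p_def conv_scale
      by (rule sum.cong) (auto simp: norm_mult power_mult_distrib)
    moreover have "t\<^sup>2 * (C' * s1) = \<bar>C\<bar>" using t2 s1pos e by (simp add: C'_def)
    moreover have "t\<^sup>2 * (C' * s1) \<le> t\<^sup>2 * EE a p1 N" using Egt by (intro mult_left_mono) auto
    ultimately show ?thesis by linarith
  qed
  ultimately show ?thesis by (intro exI[of _ p] exI[of _ N]) auto
qed



lemma gliding_hump:
  assumes H0: "\<forall>f. sq_summable f \<longrightarrow> sq_summable (conv a f)"
  shows "\<exists>C. \<forall>p N. sq_summable p \<longrightarrow> EE a p N \<le> C * (\<Sum>k. (norm (p k))\<^sup>2)"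
proof (rule ccontr)
  assume H: "\<not> ?thesis"
  define Q where "Q C \<epsilon> p n \<longleftrightarrow> (\<forall>k\<ge>n. p k = 0) \<and> (\<Sum>k<n. (norm (p k))\<^sup>2) \<le> \<epsilon> \<and> C \<le> EE a p n"
    for C \<epsilon> p n
  have "\<forall>x::real \<times> nat. \<exists>y. Q (fst x) ((1/2)^(snd x)) (fst y) (snd y)"
  proof
    fix x :: "real \<times> nat"
    obtain p n where "Q (fst x) ((1/2)^(snd x)) p n"
      using hump_pieces[OF H, of "(1/2)^(snd x)" "fst x"] unfolding Q_def by auto
    then show "\<exists>y. Q (fst x) ((1/2)^(snd x)) (fst y) (snd y)" by (intro exI[of _ "(p, n)"]) simp
  qed
  then obtain G where G: "\<And>x. Q (fst x) ((1/2)^(snd x)) (fst (G x)) (snd (G x))"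
    by metis
  define RR where "RR S = (\<Sum>m. (norm (conv a S m))\<^sup>2)" for S
  define CC where "CC S j = (real j + 1 + sqrt \<bar>RR S\<bar>)\<^sup>2" for S j
  define stp where "stp j s = ((\<lambda>k. fst s k + sh (snd s) (fst (G (CC (fst s) j, j))) k),
      snd s + snd (G (CC (fst s) j, j)))" for j s
  define st where "st = rec_nat ((\<lambda>k. 0), 0) stp"
  define S where "S j = fst (st j)" for j
  define M where "M j = snd (st j)" for j
  define pj where "pj j = fst (G (CC (S j) j, j))" for j
  define nj where "nj j = snd (G (CC (S j) j, j))" for j
  have S0: "S 0 = (\<lambda>k. 0)" "M 0 = 0" by (simp_all add: S_def M_def st_def)
  have SS: "S (Suc j) = (\<lambda>k. S j k + sh (M j) (pj j) k)" "M (Suc j) = M j + nj j" for j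
    by (simp_all add: S_def M_def st_def stp_def pj_def nj_def)
  have Qj: "Q (CC (S j) j) ((1/2)^j) (pj j) (nj j)" for j
    using G[of "(CC (S j) j, j)"] by (simp add: pj_def nj_def)
  have pz: "\<And>k. k \<ge> nj j \<Longrightarrow> pj j k = 0" for j using Qj[of j] by (simp add: Q_def)
  have pn: "(\<Sum>k<nj j. (norm (pj j k))\<^sup>2) \<le> (1/2)^j" for j using Qj[of j] by (simp add: Q_def)
  have pE: "CC (S j) j \<le> EE a (pj j) (nj j)" for j using Qj[of j] by (simp add: Q_def)
  have CC1: "1 \<le> CC S j" for S j
  proof -
    have "1 \<le> real j + 1 + sqrt \<bar>RR S\<bar>" by simp
    then have "1 ^ 2 \<le> (real j + 1 + sqrt \<bar>RR S\<bar>)\<^sup>2" by (rule power_mono) simp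
    then show ?thesis by (simp add: CC_def)
  qed
  have njpos: "nj j \<ge> 1" for j
  proof (rule ccontr)
    assume "\<not> nj j \<ge> 1"
    then have "nj j = 0" by simp
    then have "EE a (pj j) (nj j) = 0" by (simp add: EE_def)
    then show False using pE[of j] CC1[of "S j" j] by simp
  qed
  have Mmono: "M i \<le> M j" if "i \<le> j" for i j
    by (rule lift_Suc_mono_le[OF _ that]) (simp add: SS)
  have Mge: "j \<le> M j" for j
  proof (induction j)
    case (Suc j) then show ?case using njpos[of j] by (simp add: SS)
  qed (simp add: S0)
  have supp: "\<forall>k\<ge>M j. S j k = 0" for j
  proof (induction j)
    case 0 then show ?case by (simp add: S0)
  next
    case (Suc j)
    show ?case
    proof (intro allI impI)
      fix k assume k: "M (Suc j) \<le> k"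
      then have "S j k = 0" using Suc by (simp add: SS)
      moreover have "sh (M j) (pj j) k = 0" using k pz[of j "k - M j"] by (simp add: SS sh_def)
      ultimately show "S (Suc j) k = 0" by (simp add: SS)
    qed
  qed
  have stable: "S j k = S i k" if "i \<le> j" "k < M i" for i j k
    using that(1)
  proof (induction j rule: dec_induct)
    case base then show ?case by simp
  next
    case (step j)
    have "k < M j" using that(2) Mmono[OF step(1)] by simp
    then have "sh (M j) (pj j) k = 0" by (simp add: sh_def)
    then show ?case using step(3) by (simp add: SS)
  qed
  have sqS: "sq_summable (S j)" for j
  proof -
    have "eventually (\<lambda>k. S j k = (\<lambda>k. 0) k) sequentially"
      using supp[of j] by (auto intro: eventually_sequentiallyI)
    then show ?thesis using sq_summable_cong by (simp add: sq_summable_def)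
  qed
  have nrm: "(\<Sum>k<M j. (norm (S j k))\<^sup>2) \<le> 2 - 2 * (1/2)^j" for j
  proof (induction j)
    case 0 then show ?case by (simp add: S0)
  next
    case (Suc j)
    have "(\<Sum>k<M (Suc j). (norm (S (Suc j) k))\<^sup>2) =
        (\<Sum>k<M j. (norm (S (Suc j) k))\<^sup>2) + (\<Sum>l<nj j. (norm (S (Suc j) (M j + l)))\<^sup>2)"
      by (simp add: SS(2) sum_split_add)
    also have "(\<Sum>k<M j. (norm (S (Suc j) k))\<^sup>2) = (\<Sum>k<M j. (norm (S j k))\<^sup>2)"
      by (rule sum.cong) (auto simp: SS sh_def)
    also have "(\<Sum>l<nj j. (norm (S (Suc j) (M j + l)))\<^sup>2) = (\<Sum>l<nj j. (norm (pj j l))\<^sup>2)"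
      by (rule sum.cong) (auto simp: SS sh_def supp)
    finally show ?case using Suc pn[of j] by simp
  qed
  have Ebig: "(real j + 1)\<^sup>2 \<le> EE a (S (Suc j)) (M (Suc j))" for j
  proof -
    define A where "A = {..<M (Suc j)}"
    define u where "u m = conv a (S (Suc j)) m" for m
    define v where "v m = conv a (S j) m" for m
    define w where "w m = conv a (sh (M j) (pj j)) m" for m
    have uvw: "u m = v m + w m" for m
      by (simp add: u_def v_def w_def SS(1) conv_add)
    have L2E: "L2_set (\<lambda>m. norm (conv a f m)) A = sqrt (EE a f (M (Suc j)))" for f
      by (simp add: L2_set_def EE_def A_def)
    have "real j + 1 + sqrt \<bar>RR (S j)\<bar> = sqrt (CC (S j) j)"
      by (simp add: CC_def)
    also have "\<dots> \<le> sqrt (EE a (pj j) (nj j))" using pE[of j] by simp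
    also have "EE a (pj j) (nj j) = EE a (sh (M j) (pj j)) (M (Suc j))"
      by (simp add: SS EE_sh)
    also have "sqrt \<dots> = L2_set (\<lambda>m. norm (w m)) A" by (simp add: L2E w_def)
    also have "\<dots> \<le> L2_set (\<lambda>m. norm (u m) + norm (v m)) A"
    proof (rule L2_set_mono)
      fix m
      have "norm (w m) = norm (u m - v m)" using uvw[of m] by simp
      also have "\<dots> \<le> norm (u m) + norm (v m)" by (rule norm_triangle_ineq4)
      finally show "norm (w m) \<le> norm (u m) + norm (v m)" .
    qed simp
    also have "\<dots> \<le> L2_set (\<lambda>m. norm (u m)) A + L2_set (\<lambda>m. norm (v m)) A"
      by (rule L2_set_triangle_ineq)
    also have "L2_set (\<lambda>m. norm (v m)) A \<le> sqrt \<bar>RR (S j)\<bar>"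
    proof -
      have sm: "summable (\<lambda>m. (norm (conv a (S j) m))\<^sup>2)"
        using H0 sqS[of j] by (simp add: sq_summable_def)
      have "EE a (S j) (M (Suc j)) \<le> RR (S j)"
        unfolding EE_def RR_def by (rule sum_le_suminf[OF sm]) auto
      then show ?thesis by (simp add: L2E v_def)
    qed
    finally have "real j + 1 \<le> L2_set (\<lambda>m. norm (u m)) A" by simp
    then have "(real j + 1)\<^sup>2 \<le> (L2_set (\<lambda>m. norm (u m)) A)\<^sup>2" by (rule power_mono) simp
    also have "(L2_set (\<lambda>m. norm (u m)) A)\<^sup>2 = EE a (S (Suc j)) (M (Suc j))"
      by (simp add: L2E u_def EE_def sum_nonneg)
    finally show ?thesis .
  qed
  define f where "f k = S (Suc k) k" for k
  have fS: "f k = S i k" if "k < M i" for i k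
  proof (cases "i \<le> Suc k")
    case True then show ?thesis using stable[OF True that] by (simp add: f_def)
  next
    case False
    have "k < M (Suc k)" using Mge[of "Suc k"] by simp
    then show ?thesis using stable[of "Suc k" i k] False by (simp add: f_def)
  qed
  have "sq_summable f"
    unfolding sq_summable_def
  proof (rule summableI_nonneg_bounded)
    fix K
    have "(\<Sum>k<K. (norm (f k))\<^sup>2) \<le> (\<Sum>k<M K. (norm (f k))\<^sup>2)"
      by (rule sum_mono2) (use Mge[of K] in auto)
    also have "\<dots> = (\<Sum>k<M K. (norm (S K k))\<^sup>2)" by (rule sum.cong) (auto simp: fS)
    also have "\<dots> \<le> 2"
    proof -
      have "(0::real) \<le> 2 * (1/2)^K" by simp
      then show ?thesis using nrm[of K] by linarith
    qed
    finally show "(\<Sum>k<K. (norm (f k))\<^sup>2) \<le> 2" .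
  qed simp
  then have smf: "summable (\<lambda>m. (norm (conv a f m))\<^sup>2)" using H0 by (simp add: sq_summable_def)
  define j where "j = nat \<lceil>RR f\<rceil>"
  have "EE a f (M (Suc j)) = EE a (S (Suc j)) (M (Suc j))"
    by (rule EE_cong) (auto simp: fS)
  then have "(real j + 1)\<^sup>2 \<le> EE a f (M (Suc j))" using Ebig[of j] by simp
  also have "EE a f (M (Suc j)) \<le> RR f"
    unfolding EE_def RR_def by (rule sum_le_suminf[OF smf]) auto
  finally have "(real j + 1)\<^sup>2 \<le> RR f" .
  moreover have "real j + 1 \<le> (real j + 1)\<^sup>2" by (simp add: power2_eq_square)
  moreover have "RR f \<le> real j" unfolding j_def by linarith
  ultimately show False by linarith
qed



lemma bounded_from_C:
  assumes sera: "ser a \<phi>"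
    and C: "\<forall>p N. sq_summable p \<longrightarrow> EE a p N \<le> C * (\<Sum>k. (norm (p k))\<^sup>2)"
    and w: "w \<in> ball 0 1"
  shows "(norm (\<phi> w))\<^sup>2 \<le> 2 * C"
proof -
  define \<rho> where "\<rho> = (norm w)\<^sup>2"
  have \<rho>: "0 \<le> \<rho>" "\<rho> < 1" using w by (auto simp: \<rho>_def abs_square_less_1)
  have "(\<lambda>n. \<rho> ^ n) \<longlonglongrightarrow> 0" using \<rho> by (intro LIMSEQ_power_zero) simp
  then have "eventually (\<lambda>n. \<rho> ^ n < 1/2) sequentially" by (rule order_tendstoD(2)) simp
  then obtain K where K: "\<rho> ^ K < 1/2" by (meson eventually_sequentially order.refl)
  have K1: "K \<ge> 1" using K by (cases K) auto
  define sI where "sI = 1 / (1 - \<rho>)"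
  define sK where "sK = (\<Sum>k<K. \<rho> ^ k)"
  have sK: "sK = (1 - \<rho> ^ K) / (1 - \<rho>)" using \<rho> by (simp add: sK_def sum_gp_strict)
  have sKpos: "sK > 0" using \<rho> K by (simp add: sK)
  have sIK: "sI \<le> 2 * sK" using \<rho> K by (simp add: sK sI_def field_simps)
  define p where "p k = (if k < K then cnj w ^ k else 0)" for k
  have pK: "\<forall>k\<ge>K. p k = 0" by (simp add: p_def)
  have p2: "(norm (p k))\<^sup>2 = (if k < K then \<rho> ^ k else 0)" for k
    by (simp add: p_def \<rho>_def norm_power power_mult_distrib[symmetric] power_mult[symmetric] mult.commute)
  have sqp: "sq_summable p"
    unfolding sq_summable_def by (rule summable_finite[of "{..<K}"]) (auto simp: p_def)
  have nrp: "(\<Sum>k. (norm (p k))\<^sup>2) = sK"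
    by (subst suminf_finite[of "{..<K}"]) (auto simp: p2 sK_def)
  define PK where "PK z = (\<Sum>m<K. p m * z ^ m)" for z
  have serp: "ser p PK" unfolding PK_def by (rule ser_finite[OF pK])
  have PKw: "PK w = of_real sK"
  proof -
    have "PK w = (\<Sum>m<K. of_real (\<rho> ^ m))"
      unfolding PK_def
    proof (rule sum.cong)
      fix m assume "m \<in> {..<K}"
      then have "p m * w ^ m = (cnj w * w) ^ m" by (simp add: p_def power_mult_distrib)
      also have "cnj w * w = of_real \<rho>" using complex_norm_square[of w] by (simp add: \<rho>_def mult.commute)
      finally show "p m * w ^ m = of_real (\<rho> ^ m)" by simp
    qed simp
    then show ?thesis by (simp add: sK_def)
  qed
  have sums: "(\<lambda>m. conv a p m * w ^ m) sums (\<phi> w * of_real sK)"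
    using ser_conv[OF sera serp] w PKw unfolding ser_def by fastforce
  have bnd: "(norm (\<Sum>m<N. conv a p m * w ^ m))\<^sup>2 \<le> C * sK * sI" for N
  proof -
    have "norm (\<Sum>m<N. conv a p m * w ^ m) \<le> (\<Sum>m<N. \<bar>norm (conv a p m)\<bar> * \<bar>norm w ^ m\<bar>)"
      by (rule order.trans[OF norm_sum]) (simp add: norm_mult norm_power)
    also have "\<dots> \<le> L2_set (\<lambda>m. norm (conv a p m)) {..<N} * L2_set (\<lambda>m. norm w ^ m) {..<N}"
      by (rule L2_set_mult_ineq)
    finally have "(norm (\<Sum>m<N. conv a p m * w ^ m))\<^sup>2 \<le>
        (L2_set (\<lambda>m. norm (conv a p m)) {..<N} * L2_set (\<lambda>m. norm w ^ m) {..<N})\<^sup>2"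
      by (rule power_mono) simp
    also have "\<dots> = EE a p N * (\<Sum>m<N. \<rho> ^ m)"
      by (simp add: L2_set_def EE_def power_mult_distrib sum_nonneg \<rho>_def power_mult[symmetric]
          mult.commute[of 2])
    also have "\<dots> \<le> (C * sK) * sI"
    proof (rule mult_mono)
      show "EE a p N \<le> C * sK" using C sqp nrp by metis
      show "(\<Sum>m<N. \<rho> ^ m) \<le> sI"
      proof -
        have "(\<Sum>m<N. \<rho> ^ m) \<le> (\<Sum>m. \<rho> ^ m)"
          by (rule sum_le_suminf) (use \<rho> in auto)
        then show ?thesis using \<rho> by (simp add: sI_def suminf_geometric)
      qed
      show "0 \<le> (\<Sum>m<N. \<rho> ^ m)" using \<rho> by (intro sum_nonneg) auto
      show "0 \<le> C * sK"
        using order.trans[OF _ \<open>EE a p N \<le> C * sK\<close>] by (simp add: EE_def sum_nonneg)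
    qed
    finally show ?thesis by simp
  qed
  have "(\<lambda>N. (norm (\<Sum>m<N. conv a p m * w ^ m))\<^sup>2) \<longlonglongrightarrow> (norm (\<phi> w * of_real sK))\<^sup>2"
    using sums unfolding sums_def by (intro tendsto_intros)
  then have "(norm (\<phi> w * of_real sK))\<^sup>2 \<le> C * sK * sI"
    by (rule LIMSEQ_le_const2) (use bnd in auto)
  then have "(norm (\<phi> w))\<^sup>2 * sK * sK \<le> C * sI * sK"
    using sKpos by (simp add: norm_mult power_mult_distrib power2_eq_square mult_ac)
  then have A: "(norm (\<phi> w))\<^sup>2 * sK \<le> C * sI" using sKpos by simp
  then have "C * sI \<ge> 0" using sKpos by (metis order.trans mult_nonneg_nonneg zero_le_power2 less_imp_le)
  then have "C \<ge> 0" using \<rho> by (simp add: sI_def zero_le_divide_iff)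
  then have "C * sI \<le> C * (2 * sK)" using sIK by (simp add: mult_left_mono)
  then have "(norm (\<phi> w))\<^sup>2 * sK \<le> (2 * C) * sK" using A by simp
  then show ?thesis using sKpos by simp
qed



theorem theorem4p4:
  fixes n :: nat and b :: "nat \<Rightarrow> complex" and \<phi> :: "complex \<Rightarrow> complex"
  assumes "n \<ge> 1"
    and "\<forall>t\<ge>n. b t = 0"
    and "trunc_space_hyps b"
  shows "trunc_multiplier b \<phi> \<longleftrightarrow> \<phi> \<in> H_infty"
proof -
  have "(\<forall>f. in_H2 f \<longrightarrow> in_H2 (\<lambda>z. \<phi> z * f z)) \<longleftrightarrow> \<phi> \<in> H_infty"
  proof
    assume M: "\<forall>f. in_H2 f \<longrightarrow> in_H2 (\<lambda>z. \<phi> z * f z)"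
    define e where "e m = (if m = 0 then (1::complex) else 0)" for m :: nat
    have e0: "\<forall>k\<ge>1. e k = 0" by (simp add: e_def)
    have "ser e (\<lambda>z. \<Sum>m<1. e m * z ^ m)" by (rule ser_finite[OF e0])
    then have sere: "ser e (\<lambda>z. 1)" by (simp add: e_def)
    have "sq_summable e"
      unfolding sq_summable_def by (rule summable_finite[of "{0}"]) (auto simp: e_def)
    then have one: "in_H2 (\<lambda>z. 1)" unfolding in_H2_def using sere[unfolded ser_def] by blast
    have "in_H2 (\<lambda>z. \<phi> z * 1)" by (rule M[rule_format, OF one])
    then obtain a where a0: "sq_summable a" "\<forall>z\<in>ball 0 1. (\<lambda>m. a m * z ^ m) sums (\<phi> z * 1)"
      unfolding in_H2_def by blast
    have a: "sq_summable a" "ser a \<phi>" using a0 by (simp_all add: ser_def)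
    have hol: "\<phi> holomorphic_on ball 0 1" by (rule ser_holo[OF a(2)])
    have H0: "\<forall>f. sq_summable f \<longrightarrow> sq_summable (conv a f)"
    proof (intro allI impI)
      fix f assume f: "sq_summable f"
      define F where "F z = (\<Sum>m. f m * z ^ m)" for z
      have serF: "ser f F"
        unfolding ser_def F_def
      proof
        fix z :: complex assume "z \<in> ball 0 1"
        then have "summable (\<lambda>m. norm (f m * z ^ m))" by (intro sq_abs_summable[OF f]) auto
        then show "(\<lambda>m. f m * z ^ m) sums (\<Sum>m. f m * z ^ m)"
          by (rule summable_sums[OF summable_norm_cancel])
      qed
      have "in_H2 F" unfolding in_H2_def using f serF[unfolded ser_def] by blast
      then have "in_H2 (\<lambda>z. \<phi> z * F z)" by (rule M[rule_format])
      then obtain d where d: "sq_summable d" "ser d (\<lambda>z. \<phi> z * F z)"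
        unfolding in_H2_def ser_def by blast
      have "d = conv a f" by (rule ser_unique[OF d(2) ser_conv[OF a(2) serF]])
      then show "sq_summable (conv a f)" using d(1) by simp
    qed
    obtain C where C: "\<forall>p N. sq_summable p \<longrightarrow> EE a p N \<le> C * (\<Sum>k. (norm (p k))\<^sup>2)"
      using gliding_hump[OF H0] by blast
    have "norm (\<phi> w) \<le> sqrt (2 * C)" if "w \<in> ball 0 1" for w
      by (rule real_le_rsqrt[OF bounded_from_C[OF a(2) C that]])
    then have "bounded (\<phi> ` ball 0 1)" unfolding bounded_iff
      by (intro exI[of _ "sqrt (2 * C)"]) auto
    then show "\<phi> \<in> H_infty" using hol by (simp add: H_infty_def)
  next
    assume "\<phi> \<in> H_infty"
    then have hol: "\<phi> holomorphic_on ball 0 1" and "bounded (\<phi> ` ball 0 1)"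
      by (auto simp: H_infty_def)
    then obtain B where B: "\<forall>z\<in>ball 0 1. norm (\<phi> z) \<le> B" unfolding bounded_iff by auto
    show "\<forall>f. in_H2 f \<longrightarrow> in_H2 (\<lambda>z. \<phi> z * f z)"
      by (intro allI impI H_infty_mult[OF hol B])
  qed
  then show ?thesis using mult_iff_H2[OF assms(2)] by simp
qed

end
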